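(* Let $m>1$, $\chi>0$, $\alpha\in\mathbb R$, and let $p\ge2$ be an integer. (i) If $\chi<C_p$ and $\alpha\le0$, then $\mathcal F^p_{m,\alpha}$ has no critical point in $\mathcal R^p$. (ii) If $\chi=C_p$ and $\alpha<0$, then $\mathcal F^p_{m,\alpha}$ has no critical point in $\mathcal R^p$. (iii) If $\chi>C_p$, then any critical point $V\in\mathcal R^p$ of $\mathcal F^p_{m,\alpha}$ satisfies $\mathcal F^p_m(V)=\frac{2}{m-1}\alpha\,\frac{|V|^2}{2}$; in particular $\mathcal F^p_m(V)$ has the same sign as $\alpha$.
   Context: $\mathcal R^p=\{X\in\mathbb R^p: X_1<\dots<X_p,\ \sum_iX_i=0\}$. $\mathcal F^p_{m,\alpha}(X)=\frac1{m-1}\sum_{i=1}^{p-1}(X_{i+1}-X_i)^{1-m}-\frac{\chi}{m-1}\sum_{1\le i\ne j\le p}|X_i-X_j|^{1-m}+\alpha\frac{|X|^2}{2}$, $\mathcal F^p_m=\mathcal F^p_{m,0}$. $C_p$ is defined by $\frac1{C_p}=\max_{X\in\mathcal R^p}\frac{\sum_{1\le i\ne j\le p}|X_j-X_i|^{1-m}}{\sum_{i=1}^{p-1}(X_{i+1}-X_i)^{1-m}}$. A critical point is a point of $\mathcal R^p$ where the Euclidean gradient of the functional on $\mathbb R^p$ vanishes. *)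

theory Defs
  imports "HOL-Analysis.Analysis"
begin

text \<open>Points of R^p are represented as functions X :: nat => real, where only the
coordinates X 0, ..., X (p-1) matter (paper's X_1,...,X_p shifted by one).\<close>

definition region :: "nat \<Rightarrow> (nat \<Rightarrow> real) \<Rightarrow> bool" where
  "region p X \<longleftrightarrow> (\<forall>i. i + 1 < p \<longrightarrow> X i < X (i + 1)) \<and> (\<Sum>i<p. X i) = 0"

definition sqnorm :: "nat \<Rightarrow> (nat \<Rightarrow> real) \<Rightarrow> real" where
  "sqnorm p X = (\<Sum>i<p. (X i)\<^sup>2)"

definition consec_sum :: "real \<Rightarrow> nat \<Rightarrow> (nat \<Rightarrow> real) \<Rightarrow> real" where
  "consec_sum m p X = (\<Sum>i<p - 1. (X (i + 1) - X i) powr (1 - m))"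

definition pair_sum :: "real \<Rightarrow> nat \<Rightarrow> (nat \<Rightarrow> real) \<Rightarrow> real" where
  "pair_sum m p X = (\<Sum>i<p. \<Sum>j<p. if i \<noteq> j then \<bar>X i - X j\<bar> powr (1 - m) else 0)"

definition Fma :: "real \<Rightarrow> real \<Rightarrow> real \<Rightarrow> nat \<Rightarrow> (nat \<Rightarrow> real) \<Rightarrow> real" where
  "Fma m chi alpha p X =
     1 / (m - 1) * consec_sum m p X - chi / (m - 1) * pair_sum m p X + alpha * sqnorm p X / 2"

text \<open>C_p, defined by 1/C_p = max over R^p of pair_sum / consec_sum (max written as Sup).\<close>
definition Cp :: "real \<Rightarrow> nat \<Rightarrow> real" where
  "Cp m p = 1 / (SUP X\<in>{X. region p X}. pair_sum m p X / consec_sum m p X)"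

definition critical :: "real \<Rightarrow> real \<Rightarrow> real \<Rightarrow> nat \<Rightarrow> (nat \<Rightarrow> real) \<Rightarrow> bool" where
  "critical m chi alpha p X \<longleftrightarrow> region p X \<and>
     (\<forall>i<p. ((\<lambda>t. Fma m chi alpha p (X(i := t))) has_real_derivative 0) (at (X i)))"

end

theory Submission imports Defs begin

lemma deriv_abs_powr:
  fixes u r :: real assumes "u \<noteq> 0"
  shows "((\<lambda>x. \<bar>x\<bar> powr r) has_real_derivative r * \<bar>u\<bar> powr r / u) (at u)"
proof (cases "u > 0")
  case True
  have ev: "eventually (\<lambda>x. \<bar>x\<bar> powr r = x powr r) (nhds u)"
    using eventually_nhds_in_open[of "{0<..}" u] True
    by (auto elim!: eventually_mono)
  have "((\<lambda>x. x powr r) has_real_derivative r * u powr (r - 1)) (at u)"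
    using has_real_derivative_powr[OF True] .
  moreover have "r * u powr (r - 1) = r * \<bar>u\<bar> powr r / u"
    using True by (simp add: powr_diff)
  ultimately show ?thesis
    by (subst DERIV_cong_ev[OF refl ev refl]) simp
next
  case False
  then have neg: "u < 0" using assms by simp
  have ev: "eventually (\<lambda>x. \<bar>x\<bar> powr r = (- x) powr r) (nhds u)"
    using eventually_nhds_in_open[of "{..<0}" u] neg
    by (auto elim!: eventually_mono)
  have "((\<lambda>x. (- x) powr r) has_real_derivative r * (- u) powr (r - 1) * (- 1)) (at u)"
    using neg by (auto intro!: derivative_eq_intros)
  moreover have "r * (- u) powr (r - 1) * (- 1) = r * \<bar>u\<bar> powr r / u"
    using neg by (simp add: powr_diff field_simps)
  ultimately show ?thesis
    by (subst DERIV_cong_ev[OF refl ev refl]) simp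
qed

lemma upd_diff_deriv:
  "((\<lambda>t. (X(i:=t)) a - (X(i:=t)) b) has_real_derivative
     ((if a = i then 1 else 0) - (if b = i then 1 else 0))) (at ((X::nat\<Rightarrow>real) i))"
  by (cases "a = i"; cases "b = i") (auto intro!: derivative_eq_intros)

lemma comp_deriv:
  assumes "(g has_real_derivative g') (at ((X::nat\<Rightarrow>real) a - X b))"
  shows "((\<lambda>t. g ((X(i:=t)) a - (X(i:=t)) b)) has_real_derivative
      g' * ((if a = i then 1 else 0) - (if b = i then 1 else 0))) (at (X i))"
proof -
  have "((\<lambda>t. g ((X(i:=t)) a - (X(i:=t)) b)) has_real_derivative
      g' * ((if a = i then 1 else 0) - (if b = i then 1 else 0))) (at (X i))"
    by (rule DERIV_chain2[where f=g]) (use assms upd_diff_deriv in auto)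
  then show ?thesis .
qed

definition ee :: "nat \<Rightarrow> nat \<Rightarrow> real" where "ee a i = (if a = i then 1 else 0)"

lemma euler_swap:
  fixes X :: "nat \<Rightarrow> real"
  assumes "a < p" "b < p"
  shows "(\<Sum>i<p. X i * (c * (ee a i - ee b i))) = c * (X a - X b)"
proof -
  have "(\<Sum>i<p. X i * (c * (ee a i - ee b i)))
     = (\<Sum>i<p. c * (if i = a then X i else 0) - c * (if i = b then X i else 0))"
    by (intro sum.cong) (auto simp: algebra_simps ee_def)
  also have "\<dots> = c * (X a - X b)"
    using assms by (simp add: sum_subtractf sum_distrib_left[symmetric] algebra_simps)
  finally show ?thesis .
qed

lemma region_mono: assumes "region p X" "a < b" "b < p" shows "X a < X b"
  using assms(2,3)
proof (induction b)
  case 0 then show ?case by simp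
next
  case (Suc b)
  have s: "X b < X (Suc b)" using assms(1) Suc.prems unfolding region_def by auto
  show ?case
  proof (cases "a = b")
    case True then show ?thesis using s by simp
  next
    case False then show ?thesis using Suc s by auto
  qed
qed

lemma region_inj: assumes "region p X" "a < p" "b < p" "a \<noteq> b" shows "X a \<noteq> X b"
  using region_mono[OF assms(1)] assms(2-4) by (metis less_irrefl nat_neq_iff)


lemma consec_deriv:
  assumes "region p X"
  shows "((\<lambda>t. consec_sum m p (X(i:=t))) has_real_derivative
     (\<Sum>k<p-1. ((1-m) * (X (k+1) - X k) powr (1-m) / (X (k+1) - X k)) * (ee (k+1) i - ee k i))) (at (X i))"
  unfolding consec_sum_def ee_def
proof (rule DERIV_sum)
  fix k assume k: "k \<in> {..<p-1}"
  have pos: "X (k+1) - X k > 0" using assms k unfolding region_def by auto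
  have "((\<lambda>x. x powr (1-m)) has_real_derivative (1-m) * (X (k+1) - X k) powr (1-m) / (X (k+1) - X k)) (at (X (k+1) - X k))"
  proof -
    have "((\<lambda>x. x powr (1-m)) has_real_derivative (1-m) * (X (k+1) - X k) powr ((1-m) - 1)) (at (X (k+1) - X k))"
      using has_real_derivative_powr[OF pos] .
    moreover have "(1-m) * (X (k+1) - X k) powr ((1-m) - 1) = (1-m) * (X (k+1) - X k) powr (1-m) / (X (k+1) - X k)"
    proof -
      have "(X (k+1) - X k) powr (1-m) = (X (k+1) - X k) powr ((1-m) - 1 + 1)" by simp
      also have "\<dots> = (X (k+1) - X k) powr ((1-m) - 1) * (X (k+1) - X k)"
        unfolding powr_add using pos by simp
      finally show ?thesis using pos by simp
    qed
    ultimately show ?thesis by simp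
  qed
  from comp_deriv[OF this, of i]
  show "((\<lambda>t. ((X(i:=t)) (k+1) - (X(i:=t)) k) powr (1-m)) has_real_derivative
     ((1-m) * (X (k+1) - X k) powr (1-m) / (X (k+1) - X k)) * ((if k+1 = i then 1 else 0) - (if k = i then 1 else 0))) (at (X i))"
    by simp
qed

lemma pair_deriv:
  assumes "region p X"
  shows "((\<lambda>t. pair_sum m p (X(i:=t))) has_real_derivative
     (\<Sum>a<p. \<Sum>b<p. if a \<noteq> b then ((1-m) * \<bar>X a - X b\<bar> powr (1-m) / (X a - X b)) * (ee a i - ee b i) else 0)) (at (X i))"
  unfolding pair_sum_def ee_def
proof (rule DERIV_sum, rule DERIV_sum)
  fix a b assume a: "a \<in> {..<p}" and b: "b \<in> {..<p}"
  show "((\<lambda>t. if a \<noteq> b then \<bar>(X(i:=t)) a - (X(i:=t)) b\<bar> powr (1-m) else 0) has_real_derivative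
     (if a \<noteq> b then ((1-m) * \<bar>X a - X b\<bar> powr (1-m) / (X a - X b)) * ((if a = i then 1 else 0) - (if b = i then 1 else 0)) else 0)) (at (X i))"
  proof (cases "a = b")
    case True then show ?thesis by simp
  next
    case False
    then have "X a - X b \<noteq> 0" using region_inj[OF assms] a b by auto
    from comp_deriv[OF deriv_abs_powr[OF this, of "1-m"], of i]
    show ?thesis using False by simp
  qed
qed

lemma sq_deriv:
  shows "((\<lambda>t. sqnorm p (X(i:=t))) has_real_derivative
     (\<Sum>k<p. 2 * X k * ee k i)) (at (X i))"
  unfolding sqnorm_def ee_def
proof (rule DERIV_sum)
  fix k assume k: "k \<in> {..<p}"
  show "((\<lambda>t. ((X(i:=t)) k)\<^sup>2) has_real_derivative 2 * X k * (if k = i then 1 else 0)) (at (X i))"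
    by (cases "k = i") (auto intro!: derivative_eq_intros)
qed

lemma euler_consec:
  assumes "region p X"
  shows "(\<Sum>i<p. X i * (\<Sum>k<p-1. ((1-m) * (X (k+1) - X k) powr (1-m) / (X (k+1) - X k)) * (ee (k+1) i - ee k i)))
     = (1 - m) * consec_sum m p X"
proof -
  have "(\<Sum>i<p. X i * (\<Sum>k<p-1. ((1-m) * (X (k+1) - X k) powr (1-m) / (X (k+1) - X k)) * (ee (k+1) i - ee k i)))
     = (\<Sum>k<p-1. \<Sum>i<p. X i * (((1-m) * (X (k+1) - X k) powr (1-m) / (X (k+1) - X k)) * (ee (k+1) i - ee k i)))"
    unfolding sum_distrib_left by (rule sum.swap)
  also have "\<dots> = (\<Sum>k<p-1. (1-m) * (X (k+1) - X k) powr (1-m))"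
  proof (rule sum.cong[OF refl])
    fix k assume k: "k \<in> {..<p-1}"
    have pos: "X (k+1) - X k > 0" using assms k unfolding region_def by auto
    show "(\<Sum>i<p. X i * (((1-m) * (X (k+1) - X k) powr (1-m) / (X (k+1) - X k)) * (ee (k+1) i - ee k i))) = (1-m) * (X (k+1) - X k) powr (1-m)"
      by (subst euler_swap) (use k pos in auto)
  qed
  finally show ?thesis by (simp add: consec_sum_def sum_distrib_left)
qed

lemma euler_pair:
  assumes "region p X"
  shows "(\<Sum>i<p. X i * (\<Sum>a<p. \<Sum>b<p. if a \<noteq> b then ((1-m) * \<bar>X a - X b\<bar> powr (1-m) / (X a - X b)) * (ee a i - ee b i) else 0))
     = (1 - m) * pair_sum m p X"
proof -
  have "(\<Sum>i<p. X i * (\<Sum>a<p. \<Sum>b<p. if a \<noteq> b then ((1-m) * \<bar>X a - X b\<bar> powr (1-m) / (X a - X b)) * (ee a i - ee b i) else 0))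
     = (\<Sum>a<p. \<Sum>b<p. \<Sum>i<p. X i * (if a \<noteq> b then ((1-m) * \<bar>X a - X b\<bar> powr (1-m) / (X a - X b)) * (ee a i - ee b i) else 0))"
  proof -
    have "(\<Sum>i<p. X i * (\<Sum>a<p. \<Sum>b<p. if a \<noteq> b then ((1-m) * \<bar>X a - X b\<bar> powr (1-m) / (X a - X b)) * (ee a i - ee b i) else 0))
     = (\<Sum>i<p. \<Sum>a<p. \<Sum>b<p. X i * (if a \<noteq> b then ((1-m) * \<bar>X a - X b\<bar> powr (1-m) / (X a - X b)) * (ee a i - ee b i) else 0))"
      unfolding sum_distrib_left ..
    also have "\<dots> = (\<Sum>a<p. \<Sum>i<p. \<Sum>b<p. X i * (if a \<noteq> b then ((1-m) * \<bar>X a - X b\<bar> powr (1-m) / (X a - X b)) * (ee a i - ee b i) else 0))"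
      by (rule sum.swap)
    also have "\<dots> = (\<Sum>a<p. \<Sum>b<p. \<Sum>i<p. X i * (if a \<noteq> b then ((1-m) * \<bar>X a - X b\<bar> powr (1-m) / (X a - X b)) * (ee a i - ee b i) else 0))"
      by (rule sum.cong[OF refl], rule sum.swap)
    finally show ?thesis .
  qed
  also have "\<dots> = (\<Sum>a<p. \<Sum>b<p. (1-m) * (if a \<noteq> b then \<bar>X a - X b\<bar> powr (1-m) else 0))"
  proof (intro sum.cong[OF refl])
    fix a b assume a: "a \<in> {..<p}" and b: "b \<in> {..<p}"
    show "(\<Sum>i<p. X i * (if a \<noteq> b then ((1-m) * \<bar>X a - X b\<bar> powr (1-m) / (X a - X b)) * (ee a i - ee b i) else 0))
       = (1-m) * (if a \<noteq> b then \<bar>X a - X b\<bar> powr (1-m) else 0)"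
    proof (cases "a = b")
      case True then show ?thesis by simp
    next
      case False
      then have "X a - X b \<noteq> 0" using region_inj[OF assms] a b by auto
      have "(\<Sum>i<p. X i * (if a \<noteq> b then ((1-m) * \<bar>X a - X b\<bar> powr (1-m) / (X a - X b)) * (ee a i - ee b i) else 0))
        = (\<Sum>i<p. X i * (((1-m) * \<bar>X a - X b\<bar> powr (1-m) / (X a - X b)) * (ee a i - ee b i)))"
        using False by simp
      also have "\<dots> = ((1-m) * \<bar>X a - X b\<bar> powr (1-m) / (X a - X b)) * (X a - X b)"
        by (rule euler_swap) (use a b in auto)
      also have "\<dots> = (1-m) * (if a \<noteq> b then \<bar>X a - X b\<bar> powr (1-m) else 0)"
        using False \<open>X a - X b \<noteq> 0\<close> by simp
      finally show ?thesis .
    qed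
  qed
  finally show ?thesis unfolding pair_sum_def sum_distrib_left by simp
qed

lemma euler_sq:
  shows "(\<Sum>i<p. X i * (\<Sum>k<p. 2 * X k * ee k i)) = 2 * sqnorm p X"
proof -
  have "(\<Sum>i<p. X i * (\<Sum>k<p. 2 * X k * ee k i)) = (\<Sum>i<p. X i * (2 * X i))"
  proof (rule sum.cong[OF refl])
    fix i assume "i \<in> {..<p}"
    have "(\<Sum>k<p. 2 * X k * ee k i) = (\<Sum>k<p. if k = i then 2 * X k else 0)"
      by (rule sum.cong) (auto simp: ee_def)
    also have "\<dots> = 2 * X i" using \<open>i \<in> {..<p}\<close> by simp
    finally show "X i * (\<Sum>k<p. 2 * X k * ee k i) = X i * (2 * X i)" by simp
  qed
  also have "\<dots> = 2 * sqnorm p X" by (simp add: sqnorm_def sum_distrib_left power2_eq_square algebra_simps)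
  finally show ?thesis .
qed


lemma region_01:
  assumes "region p X" "p \<ge> 2"
  shows "X 0 < X 1"
proof -
  have "\<forall>i. i + 1 < p \<longrightarrow> X i < X (i + 1)" using assms(1) unfolding region_def by blast
  then have "0 + 1 < p \<longrightarrow> X 0 < X (0 + 1)" by (rule spec)
  then show ?thesis using assms(2) by simp
qed

lemma consec_pos:
  assumes "region p X" "p \<ge> 2"
  shows "consec_sum m p X > 0"
proof -
  have "0 < (X (0+1) - X 0) powr (1-m)"
    using region_01[OF assms] by simp
  also have "\<dots> \<le> consec_sum m p X"
    unfolding consec_sum_def
    by (rule member_le_sum[where f="\<lambda>k. (X (k + 1) - X k) powr (1 - m)"]) (use assms in auto)
  finally show ?thesis .
qed

lemma pair_term_le:
  assumes "region p X" "m > 1" "a < p" "b < p" "a \<noteq> b"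
  shows "\<bar>X a - X b\<bar> powr (1-m) \<le> consec_sum m p X"
proof -
  define k where "k = min a b"
  define l where "l = max a b"
  have kl: "k < l" "l < p" using assms unfolding k_def l_def by auto
  have "X (k+1) \<le> X l"
    using region_mono[OF assms(1), of "k+1" l] kl by (cases "k+1 = l") auto
  moreover have "\<bar>X a - X b\<bar> = X l - X k"
    using region_mono[OF assms(1), of a b] region_mono[OF assms(1), of b a] assms(3-5) unfolding k_def l_def
    by (cases "a < b") (auto simp: abs_if min_def max_def)
  moreover have pos: "X (k+1) - X k > 0" using assms(1) kl unfolding region_def by auto
  ultimately have "\<bar>X a - X b\<bar> powr (1-m) \<le> (X (k+1) - X k) powr (1-m)"
    using assms(2) by (intro powr_mono2') auto
  also have "\<dots> \<le> consec_sum m p X"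
    unfolding consec_sum_def
    by (rule member_le_sum[where f="\<lambda>k. (X (k + 1) - X k) powr (1 - m)"]) (use kl in auto)
  finally show ?thesis .
qed

lemma pair_le:
  assumes "region p X" "m > 1"
  shows "pair_sum m p X \<le> real p * real p * consec_sum m p X"
proof -
  have "pair_sum m p X \<le> (\<Sum>a<p. \<Sum>b<p. consec_sum m p X)"
    unfolding pair_sum_def
  proof (intro sum_mono)
    fix a b assume "a \<in> {..<p}" "b \<in> {..<p}"
    then show "(if a \<noteq> b then \<bar>X a - X b\<bar> powr (1 - m) else 0) \<le> consec_sum m p X"
      using pair_term_le[OF assms, of a b] consec_sum_def
      by (auto intro: sum_nonneg)
  qed
  then show ?thesis by simp
qed

lemma pair_pos:
  assumes "region p X" "p \<ge> 2"
  shows "pair_sum m p X > 0"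
proof -
  have nn: "\<And>a. (\<Sum>b<p. if a \<noteq> b then \<bar>X a - X b\<bar> powr (1 - m) else 0) \<ge> 0"
    by (intro sum_nonneg) auto
  have "X 0 \<noteq> X 1" using region_01[OF assms] by simp
  then have "0 < (if (0::nat) \<noteq> 1 then \<bar>X 0 - X 1\<bar> powr (1 - m) else 0)" by simp
  also have "\<dots> \<le> (\<Sum>b<p. if 0 \<noteq> b then \<bar>X 0 - X b\<bar> powr (1 - m) else 0)"
    by (rule member_le_sum[where f="\<lambda>b. if 0 \<noteq> b then \<bar>X 0 - X b\<bar> powr (1 - m) else 0"]) (use assms in auto)
  also have "\<dots> \<le> pair_sum m p X"
    unfolding pair_sum_def
    by (rule member_le_sum[where f="\<lambda>a. (\<Sum>b<p. if a \<noteq> b then \<bar>X a - X b\<bar> powr (1 - m) else 0)"]) (use assms nn in auto)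
  finally show ?thesis .
qed

lemma sqnorm_pos:
  assumes "region p X" "p \<ge> 2"
  shows "sqnorm p X > 0"
proof -
  have lt: "X 0 < X 1" using region_01[OF assms] .
  have a: "(X 0)\<^sup>2 \<le> sqnorm p X" unfolding sqnorm_def
    by (rule member_le_sum[where f="\<lambda>i. (X i)\<^sup>2"]) (use assms in auto)
  have b: "(X 1)\<^sup>2 \<le> sqnorm p X" unfolding sqnorm_def
    by (rule member_le_sum[where f="\<lambda>i. (X i)\<^sup>2"]) (use assms in auto)
  show ?thesis
  proof (cases "X 0 = 0")
    case True then have "X 1 \<noteq> 0" using lt by simp
    then show ?thesis using b by (smt (verit) zero_less_power2)
  next
    case False then show ?thesis using a by (smt (verit) zero_less_power2)
  qed
qed

lemma key_identity:
  assumes crit: "critical m chi alpha p V" and m: "m > 1"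
  shows "consec_sum m p V - chi * pair_sum m p V = alpha * sqnorm p V"
proof -
  have reg: "region p V" using crit unfolding critical_def by simp
  define Dc where "Dc i = (\<Sum>k<p-1. ((1-m) * (V (k+1) - V k) powr (1-m) / (V (k+1) - V k)) * (ee (k+1) i - ee k i))" for i
  define Dp where "Dp i = (\<Sum>a<p. \<Sum>b<p. if a \<noteq> b then ((1-m) * \<bar>V a - V b\<bar> powr (1-m) / (V a - V b)) * (ee a i - ee b i) else 0)" for i
  define Ds where "Ds i = (\<Sum>k<p. 2 * V k * ee k i)" for i
  have D0: "1/(m-1) * Dc i - chi/(m-1) * Dp i + alpha * Ds i / 2 = 0" if i: "i < p" for i
  proof -
    have "((\<lambda>t. Fma m chi alpha p (V(i := t))) has_real_derivative
       (1/(m-1) * Dc i - chi/(m-1) * Dp i + alpha * Ds i / 2)) (at (V i))"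
      unfolding Fma_def Dc_def Dp_def Ds_def
      by (intro DERIV_add DERIV_diff DERIV_cmult DERIV_cdivide consec_deriv[OF reg] pair_deriv[OF reg] sq_deriv)
    moreover have "((\<lambda>t. Fma m chi alpha p (V(i := t))) has_real_derivative 0) (at (V i))"
      using crit i unfolding critical_def by blast
    ultimately show ?thesis by (rule DERIV_unique)
  qed
  have "0 = (\<Sum>i<p. V i * (1/(m-1) * Dc i - chi/(m-1) * Dp i + alpha * Ds i / 2))"
    using D0 by simp
  also have "\<dots> = 1/(m-1) * (\<Sum>i<p. V i * Dc i) - chi/(m-1) * (\<Sum>i<p. V i * Dp i) + alpha / 2 * (\<Sum>i<p. V i * Ds i)"
    by (simp add: algebra_simps sum.distrib sum_subtractf sum_distrib_left)
  also have "\<dots> = 1/(m-1) * ((1-m) * consec_sum m p V) - chi/(m-1) * ((1-m) * pair_sum m p V) + alpha / 2 * (2 * sqnorm p V)"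
    unfolding Dc_def Dp_def Ds_def euler_consec[OF reg] euler_pair[OF reg] euler_sq ..
  also have "\<dots> = - consec_sum m p V + chi * pair_sum m p V + alpha * sqnorm p V"
  proof -
    have e1: "1/(m-1) * ((1-m) * x) = - x" for x using m by (simp add: field_simps)
    have e2: "chi/(m-1) * ((1-m) * x) = - (chi * x)" for x using m by (simp add: field_simps)
    show ?thesis unfolding e1 e2 by simp
  qed
  finally show ?thesis by simp
qed

theorem proposition2p4:
  fixes m chi alpha :: real and p :: nat
  assumes "m > 1" and "chi > 0" and "p \<ge> 2"
  shows "(chi < Cp m p \<longrightarrow> alpha \<le> 0 \<longrightarrow> \<not> (\<exists>V. critical m chi alpha p V))
       \<and> (chi = Cp m p \<longrightarrow> alpha < 0 \<longrightarrow> \<not> (\<exists>V. critical m chi alpha p V))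
       \<and> (chi > Cp m p \<longrightarrow> (\<forall>V. critical m chi alpha p V \<longrightarrow>
             Fma m chi 0 p V = 2 / (m - 1) * alpha * (sqnorm p V / 2)
           \<and> sgn (Fma m chi 0 p V) = sgn alpha))"
proof -
  have main: "consec_sum m p V - chi * pair_sum m p V = alpha * sqnorm p V
     \<and> Cp m p * pair_sum m p V \<le> consec_sum m p V
     \<and> pair_sum m p V > 0 \<and> sqnorm p V > 0 \<and> consec_sum m p V > 0"
    if crit: "critical m chi alpha p V" for V
  proof -
    have reg: "region p V" using crit unfolding critical_def by simp
    have cpos: "consec_sum m p V > 0" using consec_pos[OF reg assms(3)] .
    have ppos: "pair_sum m p V > 0" using pair_pos[OF reg assms(3)] .
    have bdd: "bdd_above ((\<lambda>X. pair_sum m p X / consec_sum m p X) ` {X. region p X})"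
    proof (rule bdd_aboveI2)
      fix X assume "X \<in> {X. region p X}"
      then have r: "region p X" by simp
      have c: "consec_sum m p X > 0" using consec_pos[OF r assms(3)] .
      show "pair_sum m p X / consec_sum m p X \<le> real p * real p"
        using pair_le[OF r assms(1)] c by (simp add: divide_le_eq)
    qed
    define s where "s = (SUP X\<in>{X. region p X}. pair_sum m p X / consec_sum m p X)"
    have le: "pair_sum m p V / consec_sum m p V \<le> s"
      unfolding s_def by (rule cSUP_upper[OF _ bdd]) (use reg in simp)
    have rpos: "pair_sum m p V / consec_sum m p V > 0" using cpos ppos by simp
    have spos: "s > 0" using le rpos by linarith
    have cp: "Cp m p = 1 / s" unfolding Cp_def s_def ..
    have "pair_sum m p V \<le> s * consec_sum m p V" using le cpos by (simp add: divide_le_eq)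
    then have "Cp m p * pair_sum m p V \<le> consec_sum m p V"
      unfolding cp using spos by (simp add: field_simps)
    then show ?thesis
      using key_identity[OF crit assms(1)] ppos cpos sqnorm_pos[OF reg assms(3)] by simp
  qed
  show ?thesis
  proof (intro conjI impI allI)
    assume h: "chi < Cp m p" "alpha \<le> 0"
    show "\<not> (\<exists>V. critical m chi alpha p V)"
    proof
      assume "\<exists>V. critical m chi alpha p V"
      then obtain V where "critical m chi alpha p V" by blast
      note M = main[OF this]
      have "chi * pair_sum m p V < Cp m p * pair_sum m p V"
        using h M by (intro mult_strict_right_mono) auto
      moreover have "alpha * sqnorm p V \<le> 0" using h M by (simp add: mult_nonpos_nonneg)
      ultimately show False using M by linarith
    qed
  next
    assume h: "chi = Cp m p" "alpha < 0"
    show "\<not> (\<exists>V. critical m chi alpha p V)"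
    proof
      assume "\<exists>V. critical m chi alpha p V"
      then obtain V where "critical m chi alpha p V" by blast
      note M = main[OF this]
      have "alpha * sqnorm p V < 0" using h M by (simp add: mult_neg_pos)
      moreover have "Cp m p * pair_sum m p V \<le> consec_sum m p V"
        "consec_sum m p V - Cp m p * pair_sum m p V = alpha * sqnorm p V"
        using M h(1) by auto
      ultimately show False by linarith
    qed
  next
    fix V assume "critical m chi alpha p V"
    note M = main[OF this]
    have F: "Fma m chi 0 p V = alpha * sqnorm p V / (m - 1)"
    proof -
      have "Fma m chi 0 p V = (consec_sum m p V - chi * pair_sum m p V) / (m - 1)"
        unfolding Fma_def by (simp add: diff_divide_distrib)
      then show ?thesis using M by simp
    qed
    then show "Fma m chi 0 p V = 2 / (m - 1) * alpha * (sqnorm p V / 2)" using assms(1) by (simp add: field_simps)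
    have q: "sqnorm p V / (m - 1) > 0" using M assms(1) by simp
    have e: "Fma m chi 0 p V = alpha * (sqnorm p V / (m - 1))" using F by simp
    have s1: "sgn (sqnorm p V / (m - 1)) = 1" using q by (rule sgn_pos)
    have "sgn (Fma m chi 0 p V) = sgn alpha * sgn (sqnorm p V / (m - 1))"
      unfolding e by (rule sgn_mult)
    then show "sgn (Fma m chi 0 p V) = sgn alpha" unfolding s1 by simp
  qed
qed

end
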